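(* Let $B \in \mathbb{R}^{r \times n}$ and $S\subseteq \mathbb{R}^n$, and let $S_B = \{ x^B - y^B \mid x,y \in \mathbb{R}^n_+,\ x - y \in S^* \}\subseteq\mathbb{R}^r$. Then $\sigma(S_B) = \sigma(B(\Sigma(S^* )))$.
   Context: $\mathbb{R}_+$ denotes the strictly positive reals. For $x\in\mathbb{R}^n_+$, $x^B\in\mathbb{R}^r_+$ has components $(x^B)_j=\prod_{i=1}^n x_i^{b_{ji}}$ (real exponents). $S^*=S\setminus\{0\}$. For $x\in\mathbb{R}^k$, $\sigma(x)$ is the componentwise sign vector in $\{-,0,+\}^k$; for $T\subseteq\mathbb{R}^k$, $\sigma(T)=\{\sigma(x)\mid x\in T\}$ and $\Sigma(T)=\sigma^{-1}(\sigma(T))$. $B(T)=\{Bx\mid x\in T\}$. *)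

theory Defs
  imports "HOL-Analysis.Analysis"
begin

definition mon_pow :: "real^'n \<Rightarrow> real^'n^'r \<Rightarrow> real^'r" where
  "mon_pow x B = (\<chi> j. \<Prod>i\<in>UNIV. (x $ i) powr (B $ j $ i))"

text \<open>Componentwise sign vector; the signs -,0,+ are encoded as -1,0,1.\<close>
definition sign_vec :: "real^'k \<Rightarrow> real^'k" where
  "sign_vec x = (\<chi> i. sgn (x $ i))"

definition sign_set :: "(real^'k) set \<Rightarrow> (real^'k) set" where
  "sign_set T = sign_vec ` T"

definition Sign_closure :: "(real^'k) set \<Rightarrow> (real^'k) set" where
  "Sign_closure T = sign_vec -` (sign_set T)"

definition pos_vecs :: "(real^'k) set" where
  "pos_vecs = {x. \<forall>i. 0 < x $ i}"

definition S_B :: "real^'n^'r \<Rightarrow> (real^'n) set \<Rightarrow> (real^'r) set" where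
  "S_B B S = {mon_pow x B - mon_pow y B | x y. x \<in> pos_vecs \<and> y \<in> pos_vecs \<and> x - y \<in> S - {0}}"

end

theory Submission
  imports Defs
begin

definition Lg :: "real^'n \<Rightarrow> real^'n" where "Lg x = (\<chi> i. ln (x $ i))"

lemma mon_exp:
  assumes "x \<in> pos_vecs"
  shows "mon_pow x B $ j = exp ((B *v Lg x) $ j)"
proof -
  have "mon_pow x B $ j = (\<Prod>i\<in>UNIV. exp (B $ j $ i * ln (x $ i)))"
    using assms unfolding mon_pow_def pos_vecs_def powr_def
    by (auto intro!: prod.cong simp: less_imp_neq[symmetric])
  also have "\<dots> = exp (\<Sum>i\<in>UNIV. B $ j $ i * ln (x $ i))"
    by (simp add: exp_sum)
  finally show ?thesis by (simp add: matrix_vector_mult_def Lg_def)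
qed

lemma sgn_exp_diff: "sgn (exp (a::real) - exp b) = sgn (a - b)"
  by (cases a b rule: linorder_cases) (auto simp: sgn_if)

lemma sgn_ln_diff: "0 < (a::real) \<Longrightarrow> 0 < b \<Longrightarrow> sgn (ln a - ln b) = sgn (a - b)"
  by (cases a b rule: linorder_cases) (auto simp: sgn_if)

lemma key:
  assumes "x \<in> pos_vecs" "y \<in> pos_vecs"
  shows "sign_vec (mon_pow x B - mon_pow y B) = sign_vec (B *v (Lg x - Lg y))"
  using assms
  by (simp add: sign_vec_def vec_eq_iff mon_exp sgn_exp_diff matrix_vector_mult_diff_distrib)

lemma key2:
  assumes "x \<in> pos_vecs" "y \<in> pos_vecs"
  shows "sign_vec (Lg x - Lg y) = sign_vec (x - y)"
  using assms by (simp add: sign_vec_def vec_eq_iff Lg_def pos_vecs_def sgn_ln_diff)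

theorem mainTheorem6:
  fixes B :: "real^'n^'r" and S :: "(real^'n) set"
  shows "sign_set (S_B B S) = sign_set ((\<lambda>v. B *v v) ` Sign_closure (S - {0}))"
proof
  show "sign_set (S_B B S) \<subseteq> sign_set ((\<lambda>v. B *v v) ` Sign_closure (S - {0}))"
  proof
    fix z assume "z \<in> sign_set (S_B B S)"
    then obtain x y where xy: "x \<in> pos_vecs" "y \<in> pos_vecs" "x - y \<in> S - {0}"
      and z: "z = sign_vec (mon_pow x B - mon_pow y B)"
      by (auto simp: sign_set_def S_B_def)
    have "Lg x - Lg y \<in> Sign_closure (S - {0})"
      using xy key2[OF xy(1,2)] by (auto simp: Sign_closure_def sign_set_def)
    then show "z \<in> sign_set ((\<lambda>v. B *v v) ` Sign_closure (S - {0}))"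
      using z key[OF xy(1,2)] by (auto simp: sign_set_def)
  qed
next
  show "sign_set ((\<lambda>v. B *v v) ` Sign_closure (S - {0})) \<subseteq> sign_set (S_B B S)"
  proof
    fix z assume "z \<in> sign_set ((\<lambda>v. B *v v) ` Sign_closure (S - {0}))"
    then obtain v s where s: "s \<in> S - {0}" and vs: "sign_vec v = sign_vec s"
      and z: "z = sign_vec (B *v v)"
      by (auto simp: sign_set_def Sign_closure_def)
    have sg: "sgn (v $ i) = sgn (s $ i)" for i using vs by (simp add: sign_vec_def vec_eq_iff)
    define y where "y = (\<chi> i. if v $ i = 0 then 1 else s $ i / (exp (v $ i) - 1))"
    define x where "x = (\<chi> i. exp (v $ i) * y $ i)"
    have ypos: "0 < y $ i" for i
    proof (cases "v $ i = 0")
      case True then show ?thesis by (simp add: y_def)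
    next
      case False
      show ?thesis
      proof (cases "v $ i > 0")
        case True
        then have "s $ i > 0" using sg[of i] by (auto simp: sgn_if split: if_splits)
        moreover have "exp (v $ i) > 1" using True by simp
        ultimately show ?thesis using False by (simp add: y_def)
      next
        case f2: False
        then have "v $ i < 0" using False by simp
        then have "s $ i < 0" using sg[of i] by (auto simp: sgn_if split: if_splits)
        moreover have "exp (v $ i) < 1" using \<open>v $ i < 0\<close> by simp
        ultimately show ?thesis using False by (simp add: y_def divide_neg_neg)
      qed
    qed
    have yp: "y \<in> pos_vecs" using ypos by (simp add: pos_vecs_def)
    have xp: "x \<in> pos_vecs" using ypos by (simp add: pos_vecs_def x_def)
    have "x - y = s"
    proof (subst vec_eq_iff, rule allI)
      fix i
      show "(x - y) $ i = s $ i"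
      proof (cases "v $ i = 0")
        case True
        then have "s $ i = 0" using sg[of i] by (simp add: sgn_0_0)
        then show ?thesis using True by (simp add: x_def y_def)
      next
        case False
        then have "exp (v $ i) - 1 \<noteq> 0" by simp
        have "exp (v $ i) * (s $ i / (exp (v $ i) - 1)) - s $ i / (exp (v $ i) - 1) = s $ i"
          using \<open>exp (v $ i) - 1 \<noteq> 0\<close> by (simp add: divide_simps, simp add: algebra_simps)
        then show ?thesis using False by (simp add: x_def y_def)
      qed
    qed
    have "Lg x - Lg y = v"
      using ypos by (simp add: vec_eq_iff Lg_def x_def ln_mult less_imp_neq[symmetric])
    then have "z = sign_vec (mon_pow x B - mon_pow y B)"
      using z key[OF xp yp, of B] by simp
    moreover have "mon_pow x B - mon_pow y B \<in> S_B B S"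
      unfolding S_B_def using xp yp s \<open>x - y = s\<close> by blast
    ultimately show "z \<in> sign_set (S_B B S)" by (simp add: sign_set_def)
  qed
qed

end
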